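(* Let $\bm\sigma=\sigma_1\bm e_1+\dots+\sigma_r\bm e_r\in\mathbb{Z}^r$ be a changemaker vector with $\sigma_r>1$, let $L=\langle\bm\sigma\rangle^\perp\subseteq\mathbb{Z}^r$, and let $m>1$ be minimal such that $\sigma_m>1$. If $\bm z=\sum z_i\bm e_i\in L$ is irreducible, then $|z_m|\le\sigma_m$.
   Context: $\mathbb{Z}^r$ has the standard pairing. A changemaker vector is $\bm\sigma=\sum\sigma_i\bm e_i$ with $\sigma_1=1$ and $\sigma_{i-1}\le\sigma_i\le1+\sigma_1+\dots+\sigma_{i-1}$. A non-zero $v\in L$ is irreducible if whenever $v=x+y$ with $x,y\in L$ non-zero, $x\cdot y\le-1$. *)

theory Defs
  imports Main
begin

text \<open>Vectors of Z^r are modelled as functions nat => int supported on {1..r};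
  the coordinate e_i corresponds to index i.\<close>

definition zvec :: "nat \<Rightarrow> (nat \<Rightarrow> int) set" where
  "zvec r = {v. \<forall>i. i \<notin> {1..r} \<longrightarrow> v i = 0}"

definition pair :: "nat \<Rightarrow> (nat \<Rightarrow> int) \<Rightarrow> (nat \<Rightarrow> int) \<Rightarrow> int" where
  "pair r x y = (\<Sum>i=1..r. x i * y i)"

definition changemaker :: "nat \<Rightarrow> (nat \<Rightarrow> int) \<Rightarrow> bool" where
  "changemaker r \<sigma> \<longleftrightarrow> \<sigma> \<in> zvec r \<and> 1 \<le> r \<and> \<sigma> 1 = 1 \<and>
     (\<forall>i. 2 \<le> i \<and> i \<le> r \<longrightarrow> \<sigma> (i - 1) \<le> \<sigma> i \<and> \<sigma> i \<le> 1 + (\<Sum>j=1..i-1. \<sigma> j))"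

definition orth_lattice :: "nat \<Rightarrow> (nat \<Rightarrow> int) \<Rightarrow> (nat \<Rightarrow> int) set" where
  "orth_lattice r \<sigma> = {z \<in> zvec r. pair r z \<sigma> = 0}"

definition irreducible_in :: "nat \<Rightarrow> (nat \<Rightarrow> int) set \<Rightarrow> (nat \<Rightarrow> int) \<Rightarrow> bool" where
  "irreducible_in r L v \<longleftrightarrow> v \<in> L \<and> v \<noteq> (\<lambda>_. 0) \<and>
     (\<forall>x\<in>L. \<forall>y\<in>L. x \<noteq> (\<lambda>_. 0) \<and> y \<noteq> (\<lambda>_. 0) \<and> v = (\<lambda>i. x i + y i) \<longrightarrow> pair r x y \<le> -1)"

end

theory Submission
  imports Defs
begin

lemma rep:
  fixes \<sigma> :: "nat \<Rightarrow> int" and m d D :: nat and s K N :: int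
  assumes s1: "1 \<le> s" and sm: "s \<le> int m" and K1: "1 \<le> K"
    and Pm: "(\<Sum>j=1..m. \<sigma> j) = int m - 1 + s"
    and cm: "\<And>p. m < p \<Longrightarrow> p \<le> m + D \<Longrightarrow> \<sigma> p \<le> 1 + (\<Sum>j=1..p-1. \<sigma> j)"
  shows "d \<le> D \<Longrightarrow> 0 \<le> N \<Longrightarrow> N \<le> (\<Sum>j=1..m+d. \<sigma> j) + (K-1)*s \<Longrightarrow>
     \<exists>q k T. 0 \<le> q \<and> q \<le> int m - 1 \<and> 0 \<le> k \<and> k \<le> K \<and> T \<subseteq> {m<..m+d}
     \<and> N = q + k*s + sum \<sigma> T"
proof (induction d arbitrary: N)
  case 0
  have NB': "N \<le> int m - 1 + K*s" using Pm 0(3) by (simp add: algebra_simps)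
  have dm: "N div s * s + N mod s = N" by simp
  have mp: "0 \<le> N mod s" "N mod s < s" using s1 by auto
  have dp: "0 \<le> N div s" using s1 0(2) by (simp add: pos_imp_zdiv_nonneg_iff)
  show ?case
  proof (cases "N div s \<le> K")
    case True
    show ?thesis
      apply (rule exI[of _ "N mod s"], rule exI[of _ "N div s"], rule exI[of _ "{}"])
      using True mp dp dm sm by auto
  next
    case False
    then have "(K+1) * s \<le> (N div s) * s" using s1 by (intro mult_right_mono) auto
    then have KN: "(K+1)*s \<le> N" using dm mp by linarith
    show ?thesis
      apply (rule exI[of _ "N - K*s"], rule exI[of _ K], rule exI[of _ "{}"])
      using NB' K1 s1 KN by (auto simp: algebra_simps)
  qed
next
  case (Suc d)
  have dD: "d \<le> D" using Suc.prems(1) by simp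
  have IH: "\<And>N. 0 \<le> N \<Longrightarrow> N \<le> (\<Sum>j=1..m+d. \<sigma> j) + (K-1)*s \<Longrightarrow>
     \<exists>q k T. 0 \<le> q \<and> q \<le> int m - 1 \<and> 0 \<le> k \<and> k \<le> K \<and> T \<subseteq> {m<..m+d}
     \<and> N = q + k*s + sum \<sigma> T"
    using Suc.IH[OF dD] by blast
  have PS: "(\<Sum>j=1..m+Suc d. \<sigma> j) = (\<Sum>j=1..m+d. \<sigma> j) + \<sigma> (m + Suc d)"
    by (simp add: sum.cl_ivl_Suc)
  have cS: "\<sigma> (m + Suc d) \<le> 1 + (\<Sum>j=1..m+d. \<sigma> j)"
  proof -
    have a1: "m < m + Suc d" by linarith
    have a2: "m + Suc d \<le> m + D" using Suc.prems(1) by linarith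
    have c: "\<sigma> (m + Suc d) \<le> 1 + (\<Sum>j=1..(m + Suc d)-1. \<sigma> j)" using cm[OF a1 a2] .
    have eq: "(m + Suc d) - 1 = m + d" by linarith
    show ?thesis using c by (simp only: eq)
  qed
  have Ks: "(K-1)*s \<ge> 0" using K1 s1 by simp
  show ?case
  proof (cases "N \<le> (\<Sum>j=1..m+d. \<sigma> j) + (K-1)*s")
    case True
    obtain q k T where H: "0 \<le> q \<and> q \<le> int m - 1 \<and> 0 \<le> k \<and> k \<le> K \<and> T \<subseteq> {m<..m+d}
     \<and> N = q + k*s + sum \<sigma> T" using IH[OF Suc.prems(2) True] by blast
    have "T \<subseteq> {m<..m+Suc d}" using H by auto
    then show ?thesis using H by blast
  next
    case False
    have a: "0 \<le> N - \<sigma> (m + Suc d)" using False cS Ks by linarith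
    have b: "N - \<sigma> (m + Suc d) \<le> (\<Sum>j=1..m+d. \<sigma> j) + (K-1)*s" using Suc.prems(3) PS by linarith
    obtain q k T where H: "0 \<le> q \<and> q \<le> int m - 1 \<and> 0 \<le> k \<and> k \<le> K \<and> T \<subseteq> {m<..m+d}
     \<and> N - \<sigma> (m + Suc d) = q + k*s + sum \<sigma> T" using IH[OF a b] by blast
    have fin: "finite T" using H finite_subset by blast
    have nT: "m + Suc d \<notin> T" using H by auto
    have si: "sum \<sigma> (insert (m + Suc d) T) = \<sigma> (m + Suc d) + sum \<sigma> T" using fin nT by simp
    have sub: "insert (m + Suc d) T \<subseteq> {m<..m + Suc d}" using H by auto
    have eq: "N = q + k*s + sum \<sigma> (insert (m + Suc d) T)"
      using H si by linarith
    show ?thesis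
      apply (rule exI[of _ q], rule exI[of _ k], rule exI[of _ "insert (m + Suc d) T"])
      using H sub eq by blast
  qed
qed

lemma sum_if_in: "finite A \<Longrightarrow> B \<subseteq> A \<Longrightarrow> (\<Sum>j\<in>A. if j \<in> B then f j else 0) = sum f B"
  using sum.inter_restrict[of A f B] by (simp add: Int_absorb1)

lemma sum_if_eq: "finite A \<Longrightarrow> a \<in> A \<Longrightarrow> (\<Sum>j\<in>A. if j = a then f j else 0) = (f a :: int)"
  by simp

lemma red_crit:
  assumes xL: "x \<in> orth_lattice r \<sigma>" and zL: "z \<in> orth_lattice r \<sigma>"
    and x0: "x k \<noteq> 0" and xz: "x k' \<noteq> z k'"
    and pos: "pair r x (\<lambda>i. z i - x i) \<ge> 0"
  shows "\<not> irreducible_in r (orth_lattice r \<sigma>) z"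
proof
  assume irr: "irreducible_in r (orth_lattice r \<sigma>) z"
  define y where "y = (\<lambda>i. z i - x i)"
  have "y \<in> zvec r" using xL zL unfolding orth_lattice_def zvec_def y_def by auto
  moreover have "pair r y \<sigma> = pair r z \<sigma> - pair r x \<sigma>"
    unfolding pair_def y_def by (simp add: left_diff_distrib sum_subtractf)
  ultimately have yL: "y \<in> orth_lattice r \<sigma>" using xL zL unfolding orth_lattice_def by auto
  have "x \<noteq> (\<lambda>_. 0)" using x0 by auto
  moreover have "y \<noteq> (\<lambda>_. 0)" using xz unfolding y_def by (metis eq_iff_diff_eq_0)
  moreover have "z = (\<lambda>i. x i + y i)" unfolding y_def by auto
  ultimately have "pair r x y \<le> -1" using irr xL yL unfolding irreducible_in_def by blast
  then show False using pos unfolding y_def by simp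
qed

lemma pair_lb:
  assumes "\<And>p. p \<in> {1..r} \<Longrightarrow> h p \<le> x p * (z p - x p)"
  shows "sum h {1..r} \<le> pair r x (\<lambda>i. z i - x i)"
  unfolding pair_def using assms by (intro sum_mono) auto

lemma low_sum:
  assumes "\<forall>p. 1 \<le> p \<and> p < m \<longrightarrow> \<sigma> p = (1::int)" and "S \<subseteq> {1..<m}"
  shows "sum \<sigma> S = int (card S)"
proof -
  have "sum \<sigma> S = sum (\<lambda>_. 1) S" using assms by (intro sum.cong) auto
  then show ?thesis by simp
qed

lemma UT:
  fixes \<sigma> z :: "nat \<Rightarrow> int"
  assumes low1: "\<forall>p. 1 \<le> p \<and> p < m \<longrightarrow> \<sigma> p = 1" and mr: "m \<le> r" and m1: "1 < m"
    and zL: "z \<in> orth_lattice r \<sigma>" and t: "z m \<ge> \<sigma> m + 1" and sg: "\<sigma> m > 1"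
    and S: "S \<subseteq> {1..<m}" and cS: "int (card S) = \<sigma> m" and Sz: "\<forall>j\<in>S. z j \<le> 0"
  shows "\<not> irreducible_in r (orth_lattice r \<sigma>) z"
proof -
  define x where "x = (\<lambda>j. (if j = m then 1 else 0) - (if j \<in> S then 1 else (0::int)))"
  have mS: "m \<notin> S" using S by auto
  have Sr: "S \<subseteq> {1..r}" using S mr by auto
  have mR: "m \<in> {1..r}" using m1 mr by auto
  have "x \<in> zvec r" unfolding zvec_def x_def using Sr mR by auto
  moreover have "pair r x \<sigma> = 0"
  proof -
    have "pair r x \<sigma> = (\<Sum>j\<in>{1..r}. (if j = m then \<sigma> j else 0) - (if j \<in> S then \<sigma> j else 0))"
      unfolding pair_def x_def by (intro sum.cong) auto
    also have "\<dots> = \<sigma> m - sum \<sigma> S"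
      using Sr mR by (simp add: sum_subtractf sum_if_in)
    also have "sum \<sigma> S = int (card S)" using low_sum[OF low1 S] .
    finally show ?thesis using cS by simp
  qed
  ultimately have xL: "x \<in> orth_lattice r \<sigma>" unfolding orth_lattice_def by auto
  define h where "h = (\<lambda>j. (if j = m then z m - 1 else 0) - (if j \<in> S then 1 else (0::int)))"
  have "sum h {1..r} \<le> pair r x (\<lambda>i. z i - x i)"
  proof (rule pair_lb)
    fix p assume "p \<in> {1..r}"
    show "h p \<le> x p * (z p - x p)"
      unfolding h_def x_def using mS Sz by (cases "p = m"; cases "p \<in> S") auto
  qed
  moreover have "sum h {1..r} = z m - 1 - int (card S)"
    unfolding h_def using Sr mR by (simp add: sum_subtractf sum_if_in)
  ultimately have "pair r x (\<lambda>i. z i - x i) \<ge> 0" using cS t by linarith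
  moreover have "x m \<noteq> 0" "x m \<noteq> z m" unfolding x_def using mS t sg by auto
  ultimately show ?thesis using red_crit[OF xL zL] by metis
qed


lemma U1:
  fixes \<sigma> z :: "nat \<Rightarrow> int"
  assumes low1: "\<forall>p. 1 \<le> p \<and> p < m \<longrightarrow> \<sigma> p = 1" and mr: "m \<le> r"
    and zL: "z \<in> orth_lattice r \<sigma>" and zm: "z m \<noteq> 0"
    and p: "1 \<le> p" "p < m" "z p < 0" and q: "1 \<le> q" "q < m" "z q > 0"
  shows "\<not> irreducible_in r (orth_lattice r \<sigma>) z"
proof -
  define x where "x = (\<lambda>j. (if j = q then 1 else 0) - (if j = p then 1 else (0::int)))"
  have pq: "p \<noteq> q" using p q by auto
  have R: "p \<in> {1..r}" "q \<in> {1..r}" using p q mr by auto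
  have "x \<in> zvec r" unfolding zvec_def x_def using R by auto
  moreover have "pair r x \<sigma> = 0"
  proof -
    have "pair r x \<sigma> = (\<Sum>j\<in>{1..r}. (if j = q then \<sigma> j else 0) - (if j = p then \<sigma> j else 0))"
      unfolding pair_def x_def by (intro sum.cong) auto
    also have "\<dots> = \<sigma> q - \<sigma> p" using R by (simp add: sum_subtractf)
    finally show ?thesis using low1 p q by simp
  qed
  ultimately have xL: "x \<in> orth_lattice r \<sigma>" unfolding orth_lattice_def by auto
  have "sum (\<lambda>_. 0) {1..r} \<le> pair r x (\<lambda>i. z i - x i)"
  proof (rule pair_lb)
    fix j assume "j \<in> {1..r}"
    show "0 \<le> x j * (z j - x j)"
      unfolding x_def using pq p q by (cases "j = p"; cases "j = q") auto
  qed
  then have c: "pair r x (\<lambda>i. z i - x i) \<ge> 0" by simp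
  have a: "x q \<noteq> 0" and b: "x m \<noteq> z m" unfolding x_def using pq p q zm by auto
  show ?thesis using red_crit[OF xL zL a b c] .
qed

lemma U3:
  fixes \<sigma> z :: "nat \<Rightarrow> int"
  assumes low1: "\<forall>p. 1 \<le> p \<and> p < m \<longrightarrow> \<sigma> p = 1" and mr: "m \<le> r" and m1: "1 < m"
    and zL: "z \<in> orth_lattice r \<sigma>" and t: "z m \<ge> \<sigma> m + 1" and sm: "\<sigma> m = int m"
    and lowz: "\<forall>j. 1 \<le> j \<and> j < m \<longrightarrow> z j \<le> 0"
    and p: "1 \<le> p" "p < m" "z p < 0"
  shows "\<not> irreducible_in r (orth_lattice r \<sigma>) z"
proof -
  define S where "S = {1..<m}"
  define x where "x = (\<lambda>j. (if j = m then 1 else 0) - (if j \<in> S then 1 else 0) - (if j = p then 1 else (0::int)))"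
  have mS: "m \<notin> S" unfolding S_def by auto
  have pS: "p \<in> S" unfolding S_def using p by auto
  have Sr: "S \<subseteq> {1..r}" using mr unfolding S_def by auto
  have mR: "m \<in> {1..r}" "p \<in> {1..r}" using m1 mr p by auto
  have cS: "card S = m - 1" unfolding S_def by simp
  have "x \<in> zvec r" unfolding zvec_def x_def using Sr mR by auto
  moreover have "pair r x \<sigma> = 0"
  proof -
    have "pair r x \<sigma> = (\<Sum>j\<in>{1..r}. (if j = m then \<sigma> j else 0) - (if j \<in> S then \<sigma> j else 0) - (if j = p then \<sigma> j else 0))"
      unfolding pair_def x_def by (intro sum.cong) auto
    also have "\<dots> = \<sigma> m - sum \<sigma> S - \<sigma> p"
      using Sr mR by (simp add: sum_subtractf sum_if_in)
    also have "sum \<sigma> S = int (card S)" using low_sum[OF low1, of S] unfolding S_def by simp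
    finally show ?thesis using cS sm low1 p m1 by simp
  qed
  ultimately have xL: "x \<in> orth_lattice r \<sigma>" unfolding orth_lattice_def by auto
  define h where "h = (\<lambda>j. (if j = m then z m - 1 else 0) - (if j \<in> S then 1 else 0) - (if j = p then 1 else (0::int)))"
  have "sum h {1..r} \<le> pair r x (\<lambda>i. z i - x i)"
  proof (rule pair_lb)
    fix j assume "j \<in> {1..r}"
    have "j \<in> S \<Longrightarrow> z j \<le> 0" using lowz unfolding S_def by auto
    then show "h j \<le> x j * (z j - x j)"
      unfolding h_def x_def using mS pS p by (cases "j = m"; cases "j \<in> S"; cases "j = p") auto
  qed
  moreover have "sum h {1..r} = z m - 1 - int (card S) - 1"
    unfolding h_def using Sr mR by (simp add: sum_subtractf sum_if_in)
  ultimately have c: "pair r x (\<lambda>i. z i - x i) \<ge> 0" using cS t sm m1 by linarith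
  have a: "x m \<noteq> 0" and b: "x m \<noteq> z m" unfolding x_def using mS t sm m1 p by auto
  show ?thesis using red_crit[OF xL zL a b c] .
qed


lemma MAIN:
  fixes \<sigma> z :: "nat \<Rightarrow> int" and m r i :: nat
  assumes low1: "\<forall>p. 1 \<le> p \<and> p < m \<longrightarrow> \<sigma> p = 1" and mr: "m \<le> r" and m1: "1 < m"
    and zL: "z \<in> orth_lattice r \<sigma>" and t: "z m \<ge> \<sigma> m + 1" and sg: "\<sigma> m > 1"
    and sm: "\<sigma> m \<le> int m"
    and Pm: "(\<Sum>j=1..m. \<sigma> j) = int m - 1 + \<sigma> m"
    and cmc: "\<forall>p. m < p \<and> p \<le> r \<longrightarrow> \<sigma> p \<le> 1 + (\<Sum>j=1..p-1. \<sigma> j)"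
    and mono: "\<sigma> m \<le> \<sigma> i"
    and i: "m < i" "i \<le> r" "z i \<le> 0" and imin: "\<forall>p. m < p \<and> p < i \<longrightarrow> z p > 0"
    and lowz: "\<forall>j. 1 \<le> j \<and> j < m \<longrightarrow> z j \<ge> 0"
    and Z0c: "int (card {j\<in>{1..<m}. z j = 0}) \<le> \<sigma> m - 1"
  shows "\<not> irreducible_in r (orth_lattice r \<sigma>) z"
proof -
  define d where "d = i - 1 - m"
  have md: "m + d = i - 1" unfolding d_def using i by simp
  have cm': "\<sigma> p \<le> 1 + (\<Sum>j=1..p-1. \<sigma> j)" if "m < p" "p \<le> m + d" for p
  proof -
    have "m < p \<and> p \<le> r" using that md i by linarith
    then show ?thesis using cmc by blast
  qed
  have "m < i \<and> i \<le> r" using i by linarith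
  then have ci: "\<sigma> i \<le> 1 + (\<Sum>j=1..i-1. \<sigma> j)" using cmc by blast
  have N0: "0 \<le> \<sigma> i - \<sigma> m" using mono by simp
  have Seq: "(\<Sum>j=1..m+d. \<sigma> j) = (\<Sum>j=1..i-1. \<sigma> j)" by (simp only: md)
  have pos3: "((z m - 2) - 1) * \<sigma> m \<ge> 0" using t sg by simp
  have NB: "\<sigma> i - \<sigma> m \<le> (\<Sum>j=1..m+d. \<sigma> j) + ((z m - 2) - 1) * \<sigma> m"
    using ci Seq pos3 sg by linarith
  have s1: "1 \<le> \<sigma> m" using sg by simp
  have K1: "1 \<le> z m - 2" using t sg by simp
  obtain q k T where qkT: "0 \<le> q" "q \<le> int m - 1" "0 \<le> k" "k \<le> z m - 2" "T \<subseteq> {m<..m+d}"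
      "\<sigma> i - \<sigma> m = q + k * \<sigma> m + sum \<sigma> T"
    using rep[of "\<sigma> m" m "z m - 2" \<sigma> d d "\<sigma> i - \<sigma> m", OF s1 sm K1 Pm cm' le_refl N0 NB] by blast
  have "{m<..m+d} \<subseteq> {m<..<i}" using md i by auto
  then have Tm: "T \<subseteq> {m<..<i}" using qkT(5) by blast
  define Q where "Q = {1..nat q}"
  have Qm: "Q \<subseteq> {1..<m}" unfolding Q_def using qkT(2) by auto
  have cQ: "int (card Q) = q" unfolding Q_def using qkT(1) by simp
  define x where "x = (\<lambda>j. (if j \<in> Q then 1 else 0) + (if j = m then k + 1 else 0)
      + (if j \<in> T then 1 else 0) - (if j = i then 1 else (0::int)))"
  have Qr: "Q \<subseteq> {1..r}" using Qm mr by auto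
  have Tr: "T \<subseteq> {1..r}" using Tm i by auto
  have mR: "m \<in> {1..r}" "i \<in> {1..r}" using m1 mr i by auto
  have finT: "finite T" using Tr finite_subset by blast
  have "x \<in> zvec r" unfolding zvec_def x_def using Qr Tr mR by auto
  moreover have "pair r x \<sigma> = 0"
  proof -
    have "pair r x \<sigma> = (\<Sum>j\<in>{1..r}. (if j \<in> Q then \<sigma> j else 0) + (if j = m then (k+1) * \<sigma> j else 0)
        + (if j \<in> T then \<sigma> j else 0) - (if j = i then \<sigma> j else 0))"
      unfolding pair_def x_def by (intro sum.cong) (auto simp: algebra_simps)
    also have "\<dots> = sum \<sigma> Q + (k+1) * \<sigma> m + sum \<sigma> T - \<sigma> i"
      using Qr Tr mR by (simp add: sum_subtractf sum.distrib sum_if_in)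
    also have "sum \<sigma> Q = int (card Q)" using low_sum[OF low1 Qm] .
    finally show ?thesis using cQ qkT(6) by (simp add: algebra_simps)
  qed
  ultimately have xL: "x \<in> orth_lattice r \<sigma>" unfolding orth_lattice_def by auto
  define Z0 where "Z0 = {j\<in>{1..<m}. z j = 0}"
  have Z0r: "Z0 \<subseteq> {1..r}" unfolding Z0_def using mr by auto
  define h where "h = (\<lambda>j. (if j = m then z m - 1 else 0) - (if j = i then 1 else 0)
     - (if j \<in> Z0 then 1 else (0::int)))"
  have mQ: "m \<notin> Q" "i \<notin> Q" "m \<notin> T" "i \<notin> T" "i \<noteq> m" using Qm Tm i by auto
  have "sum h {1..r} \<le> pair r x (\<lambda>i. z i - x i)"
  proof (rule pair_lb)
    fix j assume jR: "j \<in> {1..r}"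
    show "h j \<le> x j * (z j - x j)"
    proof (cases "j = m")
      case True
      then have "x j = k + 1" "h j = z m - 1" using mQ unfolding x_def h_def Z0_def by auto
      moreover have "(k+1)*(z m-(k+1)) = k*(z m-k-2) + (z m-1)" by (simp add: algebra_simps)
      moreover have "k*(z m-k-2) \<ge> 0" using qkT(3,4) by simp
      ultimately show ?thesis using True by simp
    next
      case nm: False
      show ?thesis
      proof (cases "j = i")
        case True
        then have "x j = -1" "h j = -1" using mQ i unfolding x_def h_def Z0_def by auto
        then show ?thesis using True i by simp
      next
        case ni: False
        show ?thesis
        proof (cases "j \<in> T")
          case True
          then have jT: "m < j" "j < i" using Tm by auto
          then have "j \<notin> Q" "j \<notin> Z0" using Qm unfolding Z0_def by auto
          then have "x j = 1" "h j = 0" using True nm ni unfolding x_def h_def by auto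
          moreover have "z j > 0" using imin jT by auto
          ultimately show ?thesis by simp
        next
          case nT: False
          show ?thesis
          proof (cases "j \<in> Q")
            case True
            then have "x j = 1" using nm ni nT unfolding x_def by auto
            moreover have jl: "1 \<le> j" "j < m" using True Qm by auto
            moreover have "h j = (if z j = 0 then -1 else 0)" using nm ni jl unfolding h_def Z0_def by auto
            moreover have "z j \<ge> 0" using lowz jl by auto
            ultimately show ?thesis by auto
          next
            case False
            then have "x j = 0" using nm ni nT unfolding x_def by auto
            moreover have "h j \<le> 0" using nm ni unfolding h_def by auto
            ultimately show ?thesis by simp
          qed
        qed
      qed
    qed
  qed
  moreover have "sum h {1..r} = z m - 1 - 1 - int (card Z0)"
    unfolding h_def using Z0r mR by (simp add: sum_subtractf sum_if_in)
  ultimately have c: "pair r x (\<lambda>i. z i - x i) \<ge> 0" using Z0c t unfolding Z0_def by linarith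
  have "x m = k + 1" using mQ unfolding x_def by auto
  then have a: "x m \<noteq> 0" and b: "x m \<noteq> z m" using qkT(3,4) by auto
  show ?thesis using red_crit[OF xL zL a b c] .
qed


lemma neg_orth: "z \<in> orth_lattice r \<sigma> \<Longrightarrow> (\<lambda>i. - z i) \<in> orth_lattice r \<sigma>"
  unfolding orth_lattice_def zvec_def pair_def by (auto simp: sum_negf)

lemma neg_irr:
  assumes irr: "irreducible_in r (orth_lattice r \<sigma>) z"
  shows "irreducible_in r (orth_lattice r \<sigma>) (\<lambda>i. - z i)"
proof -
  have zL: "z \<in> orth_lattice r \<sigma>" and z0: "z \<noteq> (\<lambda>_. 0)"
    and H: "\<forall>x\<in>orth_lattice r \<sigma>. \<forall>y\<in>orth_lattice r \<sigma>. x \<noteq> (\<lambda>_. 0) \<and> y \<noteq> (\<lambda>_. 0) \<and> z = (\<lambda>i. x i + y i) \<longrightarrow> pair r x y \<le> -1"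
    using irr unfolding irreducible_in_def by auto
  have "(\<lambda>i. - z i) \<noteq> (\<lambda>_. 0)"
  proof
    assume "(\<lambda>i. - z i) = (\<lambda>_. 0)"
    then have "z = (\<lambda>_. 0)" by (metis add.inverse_neutral minus_minus)
    then show False using z0 by simp
  qed
  moreover have "pair r x y \<le> -1" if xL: "x \<in> orth_lattice r \<sigma>" and yL: "y \<in> orth_lattice r \<sigma>"
    and x0: "x \<noteq> (\<lambda>_. 0)" and y0: "y \<noteq> (\<lambda>_. 0)" and e: "(\<lambda>i. - z i) = (\<lambda>i. x i + y i)" for x y
  proof -
    have "(\<lambda>i. - x i) \<noteq> (\<lambda>_. 0)"
    proof
      assume "(\<lambda>i. - x i) = (\<lambda>_. 0)"
      then have "x = (\<lambda>_. 0)" by (metis add.inverse_neutral minus_minus)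
      then show False using x0 by simp
    qed
    moreover have "(\<lambda>i. - y i) \<noteq> (\<lambda>_. 0)"
    proof
      assume "(\<lambda>i. - y i) = (\<lambda>_. 0)"
      then have "y = (\<lambda>_. 0)" by (metis add.inverse_neutral minus_minus)
      then show False using y0 by simp
    qed
    moreover have "z = (\<lambda>i. (- x i) + (- y i))"
    proof
      fix i show "z i = - x i + - y i" using fun_cong[OF e, of i] by simp
    qed
    ultimately have "pair r (\<lambda>i. - x i) (\<lambda>i. - y i) \<le> -1"
      using H neg_orth[OF xL] neg_orth[OF yL] by blast
    then show ?thesis unfolding pair_def by simp
  qed
  ultimately show ?thesis using neg_orth[OF zL] unfolding irreducible_in_def by blast
qed

theorem lemma7p3:
  fixes r m :: nat and \<sigma> z :: "nat \<Rightarrow> int"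
  assumes "changemaker r \<sigma>"
    and "\<sigma> r > 1"
    and "1 < m" and "m \<le> r" and "\<sigma> m > 1"
    and "\<forall>i. 1 < i \<and> i < m \<longrightarrow> \<not> (\<sigma> i > 1)"
    and "irreducible_in r (orth_lattice r \<sigma>) z"
  shows "\<bar>z m\<bar> \<le> \<sigma> m"
proof -
  note cm = assms(1) and m1 = assms(3) and mr = assms(4) and sg = assms(5) and lowa = assms(6)
    and irr = assms(7)
  have cmd: "\<sigma> \<in> zvec r \<and> 1 \<le> r \<and> \<sigma> 1 = 1 \<and>
     (\<forall>i. 2 \<le> i \<and> i \<le> r \<longrightarrow> \<sigma> (i - 1) \<le> \<sigma> i \<and> \<sigma> i \<le> 1 + (\<Sum>j=1..i-1. \<sigma> j))"
    using cm unfolding changemaker_def .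
  note s1 = cmd[THEN conjunct2, THEN conjunct2, THEN conjunct1]
  note cmi = cmd[THEN conjunct2, THEN conjunct2, THEN conjunct2]
  have mono: "\<sigma> p \<le> \<sigma> q" if "1 \<le> p" "p \<le> q" "q \<le> r" for p q
  proof -
    have "q \<le> r \<longrightarrow> \<sigma> p \<le> \<sigma> q" using \<open>p \<le> q\<close>
    proof (induction q rule: dec_induct)
      case base then show ?case by simp
    next
      case (step n)
      show ?case
      proof
        assume "Suc n \<le> r"
        then have "2 \<le> Suc n \<and> Suc n \<le> r" using step.hyps that(1) by linarith
        then have "\<sigma> (Suc n - 1) \<le> \<sigma> (Suc n)" by (rule cmi[rule_format, THEN conjunct1])
        then have "\<sigma> n \<le> \<sigma> (Suc n)" by simp
        moreover have "\<sigma> p \<le> \<sigma> n" using step.IH \<open>Suc n \<le> r\<close> by simp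
        ultimately show "\<sigma> p \<le> \<sigma> (Suc n)" by simp
      qed
    qed
    then show ?thesis using that by simp
  qed
  have low1: "\<forall>p. 1 \<le> p \<and> p < m \<longrightarrow> \<sigma> p = 1"
  proof (intro allI impI)
    fix p assume p: "1 \<le> p \<and> p < m"
    have "\<sigma> 1 \<le> \<sigma> p" using mono[of 1 p] p mr by simp
    moreover have "\<sigma> p \<le> 1"
    proof (cases "p = 1")
      case True then show ?thesis using s1 by simp
    next
      case False
      then have "1 < p \<and> p < m" using p by linarith
      then have "\<not> \<sigma> p > 1" using lowa by blast
      then show ?thesis by simp
    qed
    ultimately show "\<sigma> p = 1" using s1 by simp
  qed
  have lowsum: "(\<Sum>j=1..m-1. \<sigma> j) = int m - 1"
  proof -
    have "{1..m-1} \<subseteq> {1..<m}" by auto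
    then have "(\<Sum>j=1..m-1. \<sigma> j) = int (card {1..m-1})" using low_sum[OF low1] by blast
    then show ?thesis using m1 by simp
  qed
  have "2 \<le> m \<and> m \<le> r" using m1 mr by linarith
  then have "\<sigma> m \<le> 1 + (\<Sum>j=1..m-1. \<sigma> j)" by (rule cmi[rule_format, THEN conjunct2])
  then have sm: "\<sigma> m \<le> int m" using lowsum by simp
  have Pm: "(\<Sum>j=1..m. \<sigma> j) = int m - 1 + \<sigma> m"
  proof -
    have e: "{1..m} = insert m {1..m-1}" using m1 by auto
    have "(\<Sum>j=1..m. \<sigma> j) = \<sigma> m + (\<Sum>j=1..m-1. \<sigma> j)" unfolding e by (subst sum.insert) auto
    then show ?thesis using lowsum by simp
  qed
  have cmc: "\<forall>p. m < p \<and> p \<le> r \<longrightarrow> \<sigma> p \<le> 1 + (\<Sum>j=1..p-1. \<sigma> j)"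
  proof (intro allI impI)
    fix p assume "m < p \<and> p \<le> r"
    then have "2 \<le> p \<and> p \<le> r" using m1 by linarith
    then show "\<sigma> p \<le> 1 + (\<Sum>j=1..p-1. \<sigma> j)" by (rule cmi[rule_format, THEN conjunct2])
  qed
  have key: "\<not> irreducible_in r (orth_lattice r \<sigma>) w"
    if wL: "w \<in> orth_lattice r \<sigma>" and wt: "w m \<ge> \<sigma> m + 1" for w
  proof (cases "\<exists>p. 1 \<le> p \<and> p < m \<and> w p < 0")
    case True
    then obtain p where p: "1 \<le> p" "p < m" "w p < 0" by blast
    show ?thesis
    proof (cases "\<exists>q. 1 \<le> q \<and> q < m \<and> w q > 0")
      case True
      then obtain q where q: "1 \<le> q" "q < m" "w q > 0" by blast
      have "w m \<noteq> 0" using wt sg by simp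
      then show ?thesis using U1[OF low1 mr wL _ p q] by blast
    next
      case False
      then have lowz: "\<forall>j. 1 \<le> j \<and> j < m \<longrightarrow> w j \<le> 0" by force
      show ?thesis
      proof (cases "\<sigma> m \<le> int m - 1")
        case True
        define S where "S = {1..nat (\<sigma> m)}"
        have S: "S \<subseteq> {1..<m}" unfolding S_def using True by auto
        have cS: "int (card S) = \<sigma> m" unfolding S_def using sg by simp
        have Sz: "\<forall>j\<in>S. w j \<le> 0" using S lowz by auto
        show ?thesis using UT[OF low1 mr m1 wL wt sg S cS Sz] .
      next
        case False
        then have "\<sigma> m = int m" using sm by simp
        then show ?thesis using U3[OF low1 mr m1 wL wt _ lowz p] by blast
      qed
    qed
  next
    case False
    then have lowz: "\<forall>j. 1 \<le> j \<and> j < m \<longrightarrow> w j \<ge> 0" by force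
    define Z0 where "Z0 = {j\<in>{1..<m}. w j = 0}"
    show ?thesis
    proof (cases "nat (\<sigma> m) \<le> card Z0")
      case True
      then obtain S where S0: "S \<subseteq> Z0" and cS0: "card S = nat (\<sigma> m)"
        using obtain_subset_with_card_n by metis
      have S: "S \<subseteq> {1..<m}" using S0 unfolding Z0_def by auto
      have cS: "int (card S) = \<sigma> m" using cS0 sg by simp
      have Sz: "\<forall>j\<in>S. w j \<le> 0" using S0 unfolding Z0_def by auto
      show ?thesis using UT[OF low1 mr m1 wL wt sg S cS Sz] .
    next
      case False
      then have Z0c: "int (card {j\<in>{1..<m}. w j = 0}) \<le> \<sigma> m - 1" unfolding Z0_def by simp
      have ex: "\<exists>p. m < p \<and> p \<le> r \<and> w p \<le> 0"
      proof (rule ccontr)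
        assume "\<not> ?thesis"
        then have hi: "\<forall>p. m < p \<and> p \<le> r \<longrightarrow> w p > 0" by force
        have "0 < (\<Sum>j\<in>{1..r}. w j * \<sigma> j)"
        proof (rule sum_pos2[of "{1..r}" m])
          show "finite {1..r}" by simp
          show "m \<in> {1..r}" using m1 mr by simp
          show "0 < w m * \<sigma> m" using wt sg by simp
          fix j assume j: "j \<in> {1..r}"
          have "\<sigma> j \<ge> 1" using mono[of 1 j] j s1 by simp
          moreover have "w j \<ge> 0"
          proof -
            consider "j < m" | "j = m" | "m < j" by linarith
            then show ?thesis
            proof cases
              case 1 then show ?thesis using lowz j by auto
            next
              case 2 then show ?thesis using wt sg by simp
            next
              case 3 then show ?thesis using hi j by fastforce
            qed
          qed
          ultimately show "0 \<le> w j * \<sigma> j" by simp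
        qed
        moreover have "(\<Sum>j\<in>{1..r}. w j * \<sigma> j) = 0" using wL unfolding orth_lattice_def pair_def by simp
        ultimately show False by simp
      qed
      define i where "i = (LEAST p. m < p \<and> p \<le> r \<and> w p \<le> 0)"
      have iP: "m < i \<and> i \<le> r \<and> w i \<le> 0" unfolding i_def using LeastI_ex[OF ex] .
      then have i: "m < i" "i \<le> r" "w i \<le> 0" by auto
      have imin: "\<forall>p. m < p \<and> p < i \<longrightarrow> w p > 0"
      proof (intro allI impI)
        fix p assume a: "m < p \<and> p < i"
        then have "\<not> (m < p \<and> p \<le> r \<and> w p \<le> 0)" using not_less_Least[of p "\<lambda>p. m < p \<and> p \<le> r \<and> w p \<le> 0"] unfolding i_def by blast
        then show "w p > 0" using a i by auto
      qed
      have monoi: "\<sigma> m \<le> \<sigma> i" using mono[of m i] m1 i by simp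
      show ?thesis using MAIN[OF low1 mr m1 wL wt sg sm Pm cmc monoi i imin lowz Z0c] .
    qed
  qed
  show ?thesis
  proof (rule ccontr)
    assume "\<not> \<bar>z m\<bar> \<le> \<sigma> m"
    then have "z m \<ge> \<sigma> m + 1 \<or> - z m \<ge> \<sigma> m + 1" by arith
    then show False
    proof
      assume "z m \<ge> \<sigma> m + 1"
      then show False using key[of z] irr unfolding irreducible_in_def by blast
    next
      assume a: "- z m \<ge> \<sigma> m + 1"
      have zL: "z \<in> orth_lattice r \<sigma>" using irr unfolding irreducible_in_def by blast
      show False using key[OF neg_orth[OF zL]] a neg_irr[OF irr] by simp
    qed
  qed
qed

end
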